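(* Let $G$ be a connected graph with a list-assignment $L$ such that $|L(u)|\ge\deg(u)+1$ for all $u\in V(G)$, and let $\alpha,\beta$ be $L$-colourings of $G$. Suppose there exist $v\in V(G)$ and distinct $w_1,w_2\in N(v)$ such that $\alpha(w_1)=\beta(w_1)$, $\alpha(w_1)=\alpha(w_2)$, $\beta(w_1)=\beta(w_2)$, and $G-\{w_1,w_2\}$ is connected. Then $\alpha\sim\beta$; furthermore, there exists a recolouring sequence from $\alpha$ to $\beta$ that recolours neither $w_1$ nor $w_2$.
   Context: An $L$-colouring is a proper colouring $\varphi$ with $\varphi(v)\in L(v)$ for all $v$. $\alpha\sim\beta$ means $\alpha$ can be transformed into $\beta$ by a sequence of single-vertex recolouring steps, each changing the colour of one vertex to another colour of its list and keeping the colouring a proper $L$-colouring. (In the paper's terminology, $w_1,w_2$ is a "very good pair" for $v$ with respect to both $\alpha$ and $\beta$.) *)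

theory Defs
  imports Main
begin

definition simple_graph :: "'a set \<Rightarrow> ('a \<Rightarrow> 'a \<Rightarrow> bool) \<Rightarrow> bool" where
  "simple_graph V E \<longleftrightarrow> finite V \<and> (\<forall>u w. E u w \<longrightarrow> u \<in> V \<and> w \<in> V)
     \<and> (\<forall>u w. E u w \<longrightarrow> E w u) \<and> (\<forall>u. \<not> E u u)"

definition degree :: "'a set \<Rightarrow> ('a \<Rightarrow> 'a \<Rightarrow> bool) \<Rightarrow> 'a \<Rightarrow> nat" where
  "degree V E u = card {w \<in> V. E u w}"

definition connected_on :: "'a set \<Rightarrow> ('a \<Rightarrow> 'a \<Rightarrow> bool) \<Rightarrow> bool" where
  "connected_on S E \<longleftrightarrow> S \<noteq> {} \<and>
     (\<forall>x\<in>S. \<forall>y\<in>S. (\<lambda>a b. a \<in> S \<and> b \<in> S \<and> E a b)\<^sup>*\<^sup>* x y)"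

definition L_colouring :: "'a set \<Rightarrow> ('a \<Rightarrow> 'a \<Rightarrow> bool) \<Rightarrow> ('a \<Rightarrow> 'c set) \<Rightarrow> ('a \<Rightarrow> 'c) \<Rightarrow> bool" where
  "L_colouring V E L \<phi> \<longleftrightarrow> (\<forall>u\<in>V. \<phi> u \<in> L u) \<and> (\<forall>u\<in>V. \<forall>w\<in>V. E u w \<longrightarrow> \<phi> u \<noteq> \<phi> w)"

definition recolour_step :: "'a set \<Rightarrow> ('a \<Rightarrow> 'c) \<Rightarrow> ('a \<Rightarrow> 'c) \<Rightarrow> bool" where
  "recolour_step V \<phi> \<psi> \<longleftrightarrow> (\<exists>x\<in>V. \<phi> x \<noteq> \<psi> x \<and> (\<forall>y\<in>V - {x}. \<phi> y = \<psi> y))"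

definition recolour_seq :: "'a set \<Rightarrow> ('a \<Rightarrow> 'a \<Rightarrow> bool) \<Rightarrow> ('a \<Rightarrow> 'c set)
    \<Rightarrow> ('a \<Rightarrow> 'c) \<Rightarrow> ('a \<Rightarrow> 'c) \<Rightarrow> ('a \<Rightarrow> 'c) list \<Rightarrow> bool" where
  "recolour_seq V E L \<alpha> \<beta> ps \<longleftrightarrow> ps \<noteq> []
     \<and> (\<forall>x\<in>V. hd ps x = \<alpha> x) \<and> (\<forall>x\<in>V. last ps x = \<beta> x)
     \<and> (\<forall>\<phi>\<in>set ps. L_colouring V E L \<phi>)
     \<and> (\<forall>i. Suc i < length ps \<longrightarrow> recolour_step V (ps ! i) (ps ! Suc i))"

definition reconf_equiv :: "'a set \<Rightarrow> ('a \<Rightarrow> 'a \<Rightarrow> bool) \<Rightarrow> ('a \<Rightarrow> 'c set)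
    \<Rightarrow> ('a \<Rightarrow> 'c) \<Rightarrow> ('a \<Rightarrow> 'c) \<Rightarrow> bool" where
  "reconf_equiv V E L \<alpha> \<beta> \<longleftrightarrow> (\<exists>ps. recolour_seq V E L \<alpha> \<beta> ps)"

end

theory Submission
  imports Defs
begin

definition stp :: "'a set \<Rightarrow> ('a \<Rightarrow> 'a \<Rightarrow> bool) \<Rightarrow> ('a \<Rightarrow> 'c set) \<Rightarrow> ('a \<Rightarrow> 'c) \<Rightarrow> ('a \<Rightarrow> 'c) \<Rightarrow> bool" where
  "stp V E L \<phi> \<psi> \<longleftrightarrow> L_colouring V E L \<phi> \<and> L_colouring V E L \<psi> \<and> recolour_step V \<phi> \<psi>
     \<and> (\<forall>x. x \<notin> V \<longrightarrow> \<phi> x = \<psi> x)"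

lemma colour_mono: "L_colouring V E L \<phi> \<Longrightarrow> V' \<subseteq> V \<Longrightarrow> L_colouring V' E L \<phi>"
  unfolding L_colouring_def by blast

lemma upd_stp:
  assumes "L_colouring V E L \<chi>" "x \<in> V" "d \<in> L x" "\<chi> x \<noteq> d"
    and "\<forall>w\<in>V. E x w \<longrightarrow> \<chi> w \<noteq> d" "\<forall>u w. E u w \<longrightarrow> E w u" "\<forall>u. \<not> E u u"
  shows "stp V E L \<chi> (\<chi>(x := d))"
  using assms unfolding stp_def L_colouring_def recolour_step_def
  by (smt (verit, del_insts) DiffD2 fun_upd_apply insertI1)

lemma stp_snoc: "(stp V E L)\<^sup>*\<^sup>* \<phi> \<chi> \<Longrightarrow> stp V E L \<chi> \<psi> \<Longrightarrow> (stp V E L)\<^sup>*\<^sup>* \<phi> \<psi>"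
  by (rule rtranclp.rtrancl_into_rtrancl)

lemma lift:
  assumes "(stp V' E L)\<^sup>*\<^sup>* \<phi> y" "V = insert v V'" "v \<notin> V'" "finite V" "finite (L v)"
    "card (L v) \<ge> degree V E v + 2" "L_colouring V E L \<phi>"
    "\<forall>u w. E u w \<longrightarrow> E w u" "\<forall>u. \<not> E u u"
  shows "\<exists>\<chi>. (stp V E L)\<^sup>*\<^sup>* \<phi> \<chi> \<and> (\<forall>x\<in>V'. \<chi> x = y x) \<and> L_colouring V E L \<chi>"
  using assms(1)
proof (induction rule: rtranclp_induct)
  case base
  then show ?case using assms(7) by auto
next
  case (step y z)
  then obtain \<chi> where ch: "(stp V E L)\<^sup>*\<^sup>* \<phi> \<chi>" "\<forall>x\<in>V'. \<chi> x = y x" "L_colouring V E L \<chi>" by blast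
  from step(2) obtain x where x: "x \<in> V'" "y x \<noteq> z x" "\<forall>w\<in>V'-{x}. y w = z w"
    and zc: "L_colouring V' E L z"
    unfolding stp_def recolour_step_def by blast
  define d where "d = z x"
  have xV: "x \<in> V" using x assms(2) by auto
  have dL: "d \<in> L x" using zc x unfolding d_def L_colouring_def by auto
  have zagree: "\<forall>w\<in>V'-{x}. \<chi> w = z w" using ch(2) x(3) by auto
  have goodV': "\<forall>w\<in>V'. E x w \<longrightarrow> \<chi> w \<noteq> d"
  proof (intro ballI impI)
    fix w assume w: "w \<in> V'" "E x w"
    have "w \<noteq> x" using w assms(9) by auto
    then have "\<chi> w = z w" using zagree w by auto
    moreover have "z x \<noteq> z w" using zc x(1) w unfolding L_colouring_def by blast
    ultimately show "\<chi> w \<noteq> d" unfolding d_def by simp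
  qed
  have cx: "\<chi> x \<noteq> d" using ch(2) x unfolding d_def by auto
  show ?case
  proof (cases "E x v \<and> \<chi> v = d")
    case False
    have "\<forall>w\<in>V. E x w \<longrightarrow> \<chi> w \<noteq> d" using goodV' False assms(2) by auto
    then have s: "stp V E L \<chi> (\<chi>(x := d))" using upd_stp[OF ch(3) xV dL cx] assms(8,9) by blast
    then have "L_colouring V E L (\<chi>(x := d))" unfolding stp_def by blast
    moreover have "\<forall>w\<in>V'. (\<chi>(x := d)) w = z w" using zagree d_def by auto
    moreover have "(stp V E L)\<^sup>*\<^sup>* \<phi> (\<chi>(x := d))" using stp_snoc[OF ch(1) s] .
    ultimately show ?thesis by blast
  next
    case True
    define N where "N = \<chi> ` {w\<in>V. E v w}"
    define F where "F = insert d N"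
    have finN: "finite N" using assms(4) unfolding N_def by auto
    then have fin: "finite F" unfolding F_def by simp
    have "card F \<le> Suc (card N)" unfolding F_def using finN by (simp add: card_insert_if)
    also have "card N \<le> degree V E v" unfolding degree_def N_def by (rule card_image_le) (use assms(4) in simp)
    finally have "card F < card (L v)" using assms(6) by simp
    have "\<not> L v \<subseteq> F"
    proof
      assume "L v \<subseteq> F"
      then have "card (L v) \<le> card F" by (rule card_mono[OF fin])
      with \<open>card F < card (L v)\<close> show False by simp
    qed
    then obtain e where e: "e \<in> L v" "e \<notin> F" by blast
    have ed: "e \<noteq> d" and eN: "e \<notin> N" using e(2) unfolding F_def by auto
    have vV: "v \<in> V" using assms(2) by auto
    have s1: "stp V E L \<chi> (\<chi>(v := e))"
    proof (rule upd_stp[OF ch(3) vV e(1)])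
      show "\<chi> v \<noteq> e" using True ed by simp
      show "\<forall>w\<in>V. E v w \<longrightarrow> \<chi> w \<noteq> e" using eN unfolding N_def by blast
      show "\<forall>u w. E u w \<longrightarrow> E w u" by (fact assms(8))
      show "\<forall>u. \<not> E u u" by (fact assms(9))
    qed
    then have c1: "L_colouring V E L (\<chi>(v := e))" unfolding stp_def by blast
    have xv: "x \<noteq> v" using x assms(3) by auto
    have s2: "stp V E L (\<chi>(v := e)) (\<chi>(v := e, x := d))"
    proof (rule upd_stp[OF c1 xV dL])
      show "(\<chi>(v := e)) x \<noteq> d" using xv cx by simp
      show "\<forall>w\<in>V. E x w \<longrightarrow> (\<chi>(v := e)) w \<noteq> d"
      proof (intro ballI impI)
        fix w assume w: "w \<in> V" "E x w"
        show "(\<chi>(v := e)) w \<noteq> d"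
        proof (cases "w = v")
          case True then show ?thesis using ed by simp
        next
          case False then have "w \<in> V'" using w assms(2) by blast
          then show ?thesis using goodV' w(2) False by simp
        qed
      qed
      show "\<forall>u w. E u w \<longrightarrow> E w u" by (fact assms(8))
      show "\<forall>u. \<not> E u u" by (fact assms(9))
    qed
    then have "L_colouring V E L (\<chi>(v := e, x := d))" unfolding stp_def by blast
    moreover have "\<forall>w\<in>V'. (\<chi>(v := e, x := d)) w = z w" using zagree d_def assms(3) by auto
    moreover have "(stp V E L)\<^sup>*\<^sup>* \<phi> (\<chi>(v := e, x := d))"
      using stp_snoc[OF stp_snoc[OF ch(1) s1] s2] .
    ultimately show ?thesis by blast
  qed
qed

definition rE :: "'a set \<Rightarrow> ('a \<Rightarrow> 'a \<Rightarrow> bool) \<Rightarrow> 'a \<Rightarrow> 'a \<Rightarrow> bool" where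
  "rE V E = (\<lambda>a b. a \<in> V \<and> b \<in> V \<and> E a b)"

lemma degree_mono: "finite V \<Longrightarrow> V' \<subseteq> V \<Longrightarrow> degree V' E x \<le> degree V E x"
  unfolding degree_def by (rule card_mono) auto

lemma degree_less: "finite V \<Longrightarrow> V' \<subseteq> V \<Longrightarrow> s \<in> V \<Longrightarrow> s \<notin> V' \<Longrightarrow> E x s \<Longrightarrow> degree V' E x < degree V E x"
  unfolding degree_def by (rule psubset_card_mono) auto

lemma reach_transfer:
  assumes "(rE V E)\<^sup>*\<^sup>* u t" "finite V" "s \<in> V" "\<forall>a b. E a b \<longrightarrow> E b a"
    "card (L t) \<ge> degree V E t + 2" "u \<in> V - {s}"
    "\<forall>x\<in>V. card (L x) \<ge> degree V E x + 1"
  shows "\<exists>t'\<in>V - {s}. card (L t') \<ge> degree (V - {s}) E t' + 2 \<and> (rE (V - {s}) E)\<^sup>*\<^sup>* u t'"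
  using assms(1,5,6)
proof (induction rule: converse_rtranclp_induct)
  case base
  have "degree (V - {s}) E t \<le> degree V E t" using degree_mono[OF assms(2)] by blast
  then show ?case using base by force
next
  case (step u y)
  show ?case
  proof (cases "y = s")
    case True
    have "E u s" using step(1) True unfolding rE_def by auto
    then have "degree (V - {s}) E u < degree V E u" using degree_less[OF assms(2) _ assms(3)] by blast
    then show ?thesis using step(5) assms(7) by force
  next
    case False
    then have "y \<in> V - {s}" using step(1) unfolding rE_def by auto
    then obtain t' where t': "t' \<in> V - {s}" "card (L t') \<ge> degree (V - {s}) E t' + 2"
      "(rE (V - {s}) E)\<^sup>*\<^sup>* y t'" using step by blast
    have "rE (V - {s}) E u y" using step(1,5) \<open>y \<in> V - {s}\<close> unfolding rE_def by auto
    then show ?thesis using t' by (meson converse_rtranclp_into_rtranclp)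
  qed
qed

lemma key:
  assumes "finite V" "\<forall>u w. E u w \<longrightarrow> E w u" "\<forall>u. \<not> E u u"
    "\<forall>u\<in>V. finite (L u) \<and> card (L u) \<ge> degree V E u + 1"
    "\<forall>u\<in>V. \<exists>s\<in>V. card (L s) \<ge> degree V E s + 2 \<and> (rE V E)\<^sup>*\<^sup>* u s"
    "L_colouring V E L \<phi>" "L_colouring V E L \<psi>"
  shows "\<exists>\<chi>. (stp V E L)\<^sup>*\<^sup>* \<phi> \<chi> \<and> (\<forall>x\<in>V. \<chi> x = \<psi> x)"
  using assms
proof (induction "card V" arbitrary: V \<phi> \<psi> rule: less_induct)
  case less
  show ?case
  proof (cases "V = {}")
    case True
    then show ?thesis by blast
  next
    case False
    then obtain u where "u \<in> V" by blast
    then obtain s where s: "s \<in> V" "card (L s) \<ge> degree V E s + 2" using less.prems(5) by blast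
    define V' where "V' = V - {s}"
    have finV': "finite V'" using less.prems(1) V'_def by auto
    have cardV': "card V' < card V" using less.prems(1) s(1) unfolding V'_def by (meson card_Diff1_less)
    have h4: "\<forall>u\<in>V'. finite (L u) \<and> card (L u) \<ge> degree V' E u + 1"
    proof
      fix x assume "x \<in> V'"
      then show "finite (L x) \<and> card (L x) \<ge> degree V' E x + 1"
        using less.prems(4) degree_mono[OF less.prems(1), of V' E x] V'_def by force
    qed
    have h5: "\<forall>u\<in>V'. \<exists>s\<in>V'. card (L s) \<ge> degree V' E s + 2 \<and> (rE V' E)\<^sup>*\<^sup>* u s"
    proof
      fix x assume x: "x \<in> V'"
      then obtain t where t: "t \<in> V" "card (L t) \<ge> degree V E t + 2" "(rE V E)\<^sup>*\<^sup>* x t"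
        using less.prems(5) V'_def by blast
      show "\<exists>s\<in>V'. card (L s) \<ge> degree V' E s + 2 \<and> (rE V' E)\<^sup>*\<^sup>* x s"
        unfolding V'_def
        apply (rule reach_transfer[where L=L, OF t(3) less.prems(1) s(1) less.prems(2) t(2)])
        using x V'_def less.prems(4) by auto
    qed
    have c1: "L_colouring V' E L \<phi>" "L_colouring V' E L \<psi>"
      using colour_mono less.prems(6,7) V'_def by blast+
    obtain \<chi>' where ch': "(stp V' E L)\<^sup>*\<^sup>* \<phi> \<chi>'" "\<forall>x\<in>V'. \<chi>' x = \<psi> x"
      using less.hyps[OF cardV' finV' less.prems(2,3) h4 h5 c1] by blast
    have VV: "V = insert s V'" "s \<notin> V'" using V'_def s(1) by auto
    obtain \<chi> where ch: "(stp V E L)\<^sup>*\<^sup>* \<phi> \<chi>" "\<forall>x\<in>V'. \<chi> x = \<chi>' x" "L_colouring V E L \<chi>"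
      using lift[OF ch'(1) VV less.prems(1)] less.prems(2,3,4,6) s by blast
    show ?thesis
    proof (cases "\<chi> s = \<psi> s")
      case True
      then show ?thesis using ch ch'(2) VV by auto
    next
      case False
      have "stp V E L \<chi> (\<chi>(s := \<psi> s))"
        apply (rule upd_stp[OF ch(3) s(1)])
        using less.prems(7) s(1) False apply (simp add: L_colouring_def)
        using False apply simp
        subgoal
        proof (intro ballI impI)
          fix w assume w: "w \<in> V" "E s w"
          then have "w \<in> V'" using less.prems(3) V'_def by auto
          then have "\<chi> w = \<psi> w" using ch(2) ch'(2) by auto
          then show "\<chi> w \<noteq> \<psi> s" using less.prems(7) w s(1) unfolding L_colouring_def by metis
        qed
        using less.prems(2,3) by auto
      then show ?thesis using ch ch'(2) VV
        by (metis fun_upd_other fun_upd_same insert_iff rtranclp.rtrancl_into_rtrancl)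
    qed
  qed
qed

lemma rtranclp_list:
  assumes "R\<^sup>*\<^sup>* a b"
  shows "\<exists>ps. ps \<noteq> [] \<and> hd ps = a \<and> last ps = b \<and> (\<forall>i. Suc i < length ps \<longrightarrow> R (ps ! i) (ps ! Suc i))"
  using assms
proof (induction rule: rtranclp_induct)
  case base
  then show ?case by (rule exI[of _ "[a]"]) auto
next
  case (step y z)
  then obtain ps where ps: "ps \<noteq> []" "hd ps = a" "last ps = y" "\<forall>i. Suc i < length ps \<longrightarrow> R (ps ! i) (ps ! Suc i)" by blast
  show ?case
  proof (rule exI[of _ "ps @ [z]"], intro conjI allI impI)
    fix i assume i: "Suc i < length (ps @ [z])"
    show "R ((ps @ [z]) ! i) ((ps @ [z]) ! Suc i)"
    proof (cases "Suc i < length ps")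
      case True
      then show ?thesis using ps(4) by (simp add: nth_append)
    next
      case False
      then have "Suc i = length ps" using i by simp
      then have "i = length ps - 1" by simp
      then have "(ps @ [z]) ! i = ps ! (length ps - 1)" using i by (simp add: nth_append)
      also have "\<dots> = y" using ps(1,3) by (simp add: last_conv_nth)
      finally have "(ps @ [z]) ! i = y" .
      moreover have "(ps @ [z]) ! Suc i = z" using \<open>Suc i = length ps\<close> by (simp add: nth_append)
      ultimately have "(ps @ [z]) ! i = y" "(ps @ [z]) ! Suc i = z" by auto
      then show ?thesis using step(2) by simp
    qed
  qed (use ps in auto)
qed

lemma list_set:
  assumes "ps \<noteq> []" "P (hd ps)" "\<forall>i. Suc i < length ps \<longrightarrow> R (ps ! i) (ps ! Suc i)"
    "\<And>x y. R x y \<Longrightarrow> P y"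
  shows "\<forall>x\<in>set ps. P x"
proof
  fix x assume "x \<in> set ps"
  then obtain i where i: "i < length ps" "x = ps ! i" by (metis in_set_conv_nth)
  show "P x"
  proof (cases i)
    case 0
    then show ?thesis using i assms(1,2) by (simp add: hd_conv_nth)
  next
    case (Suc j)
    then show ?thesis using i assms(3,4) by metis
  qed
qed

lemma rtranclp_map:
  assumes "R\<^sup>*\<^sup>* a b" "\<And>x y. R x y \<Longrightarrow> S (f x) (f y)"
  shows "S\<^sup>*\<^sup>* (f a) (f b)"
  using assms(1) by (induction rule: rtranclp_induct) (auto intro: rtranclp.rtrancl_into_rtrancl assms(2))

theorem mainTheorem9:
  fixes V :: "'a set" and E :: "'a \<Rightarrow> 'a \<Rightarrow> bool" and L :: "'a \<Rightarrow> 'c set"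
    and \<alpha> \<beta> :: "'a \<Rightarrow> 'c" and v w1 w2 :: 'a
  assumes "simple_graph V E"
    and "connected_on V E"
    and "\<forall>u\<in>V. finite (L u) \<and> card (L u) \<ge> degree V E u + 1"
    and "L_colouring V E L \<alpha>" and "L_colouring V E L \<beta>"
    and "v \<in> V" and "E v w1" and "E v w2" and "w1 \<noteq> w2"
    and "\<alpha> w1 = \<beta> w1" and "\<alpha> w1 = \<alpha> w2" and "\<beta> w1 = \<beta> w2"
    and "connected_on (V - {w1, w2}) E"
  shows "reconf_equiv V E L \<alpha> \<beta> \<and>
    (\<exists>ps. recolour_seq V E L \<alpha> \<beta> ps \<and>
       (\<forall>i. Suc i < length ps \<longrightarrow> (ps ! i) w1 = (ps ! Suc i) w1 \<and> (ps ! i) w2 = (ps ! Suc i) w2))"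
proof -
  have fin: "finite V" and Ein: "\<forall>u w. E u w \<longrightarrow> u \<in> V \<and> w \<in> V"
    and sym: "\<forall>u w. E u w \<longrightarrow> E w u" and irr: "\<forall>u. \<not> E u u"
    using assms(1) unfolding simple_graph_def by auto
  define c where "c = \<alpha> w1"
  define H where "H = V - {w1, w2}"
  define L' where "L' = (\<lambda>u. if E u w1 \<or> E u w2 then L u - {c} else L u)"
  define f where "f = (\<lambda>\<phi>::'a \<Rightarrow> 'c. \<phi>(w1 := c, w2 := c))"
  have w1V: "w1 \<in> V" and w2V: "w2 \<in> V" using Ein assms(7,8) by auto
  have vH: "v \<in> H" using assms(6,7,8) irr unfolding H_def by auto
  have finH: "finite H" using fin H_def by auto
  have nw: "\<not> E w1 w2" using assms(4,11) w1V w2V unfolding L_colouring_def by metis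
  have h4: "\<forall>u\<in>H. finite (L' u) \<and> card (L' u) \<ge> degree H E u + 1"
  proof
    fix u assume u: "u \<in> H"
    have fu: "finite (L u)" and cu: "card (L u) \<ge> degree V E u + 1" using assms(3) u H_def by auto
    show "finite (L' u) \<and> card (L' u) \<ge> degree H E u + 1"
    proof (cases "E u w1 \<or> E u w2")
      case True
      have "degree H E u < degree V E u"
        using True degree_less[OF fin, of H w1 E u] degree_less[OF fin, of H w2 E u] w1V w2V H_def by auto
      moreover have "card (L u - {c}) \<ge> card (L u) - 1" using diff_card_le_card_Diff[of "{c}"] by simp
      ultimately show ?thesis using True fu cu unfolding L'_def by auto
    next
      case False
      then show ?thesis using fu cu degree_mono[OF fin, of H E u] H_def unfolding L'_def by auto
    qed
  qed
  have slack: "card (L' v) \<ge> degree H E v + 2"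
  proof -
    have fu: "finite (L v)" and cu: "card (L v) \<ge> degree V E v + 1" using assms(3,6) by auto
    have "{w \<in> V. E v w} = insert w1 (insert w2 {w \<in> H. E v w})"
      using assms(7,8) w1V w2V H_def by auto
    then have "degree V E v = degree H E v + 2"
      unfolding degree_def using assms(9) finH H_def by simp
    moreover have "card (L v - {c}) \<ge> card (L v) - 1" using diff_card_le_card_Diff[of "{c}"] by simp
    ultimately show ?thesis using fu cu assms(7) unfolding L'_def by auto
  qed
  have h5: "\<forall>u\<in>H. \<exists>s\<in>H. card (L' s) \<ge> degree H E s + 2 \<and> (rE H E)\<^sup>*\<^sup>* u s"
    using assms(13) vH slack unfolding connected_on_def rE_def H_def by blast
  have cH: "L_colouring H E L' \<phi>" if "L_colouring V E L \<phi>" "\<phi> w1 = c" "\<phi> w2 = c" for \<phi>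
  proof -
    have p1: "\<forall>u\<in>V. \<forall>w\<in>V. E u w \<longrightarrow> \<phi> u \<noteq> \<phi> w" using that(1) unfolding L_colouring_def by blast
    have p2: "\<forall>u\<in>V. \<phi> u \<in> L u" using that(1) unfolding L_colouring_def by blast
    have HV: "H \<subseteq> V" unfolding H_def by blast
    have "\<forall>u\<in>H. \<phi> u \<in> L' u"
    proof
      fix u assume u: "u \<in> H"
      then have uV: "u \<in> V" using HV by blast
      have j1: "E u w1 \<longrightarrow> \<phi> u \<noteq> \<phi> w1" using p1 uV w1V by blast
      have j2: "E u w2 \<longrightarrow> \<phi> u \<noteq> \<phi> w2" using p1 uV w2V by blast
      have i1: "E u w1 \<Longrightarrow> \<phi> u \<noteq> c" using j1 that(2) by simp
      have i2: "E u w2 \<Longrightarrow> \<phi> u \<noteq> c" using j2 that(3) by simp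
      have i3: "\<phi> u \<in> L u" using p2 uV by blast
      show "\<phi> u \<in> L' u"
      proof (cases "E u w1 \<or> E u w2")
        case True
        then have "\<phi> u \<noteq> c" using i1 i2 by blast
        then show ?thesis using True i3 unfolding L'_def by simp
      next
        case False
        then show ?thesis using i3 unfolding L'_def by simp
      qed
    qed
    moreover have "\<forall>u\<in>H. \<forall>w\<in>H. E u w \<longrightarrow> \<phi> u \<noteq> \<phi> w" using p1 HV by blast
    ultimately show ?thesis unfolding L_colouring_def by blast
  qed
  have a12: "\<alpha> w1 = c" "\<alpha> w2 = c" using c_def assms(11) by simp_all
  have b12: "\<beta> w1 = c" "\<beta> w2 = c" using c_def assms(10,12) by simp_all
  have ca: "L_colouring H E L' \<alpha>" by (rule cH[OF assms(4) a12])
  have cb: "L_colouring H E L' \<beta>" by (rule cH[OF assms(5) b12])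
  obtain \<chi> where ch: "(stp H E L')\<^sup>*\<^sup>* \<alpha> \<chi>" "\<forall>x\<in>H. \<chi> x = \<beta> x"
    using key[OF finH sym irr h4 h5 ca cb] by blast
  have aL: "\<forall>u\<in>V. \<alpha> u \<in> L u" using assms(4) unfolding L_colouring_def by blast
  have cL: "c \<in> L w1" "c \<in> L w2" using aL w1V w2V a12 by force+
  have fc: "L_colouring V E L (f \<phi>)" if "L_colouring H E L' \<phi>" for \<phi>
  proof -
    have p: "\<forall>u\<in>H. \<forall>w\<in>H. E u w \<longrightarrow> \<phi> u \<noteq> \<phi> w" "\<forall>u\<in>H. \<phi> u \<in> L' u"
      using that unfolding L_colouring_def by auto
    have fH: "f \<phi> u = \<phi> u" if "u \<in> H" for u using that unfolding f_def H_def by auto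
    have fw: "f \<phi> w1 = c" "f \<phi> w2 = c" unfolding f_def by auto
    have nc: "\<phi> u \<noteq> c" if "u \<in> H" "E u w1 \<or> E u w2" for u
      using p(2) that unfolding L'_def by auto
    have col: "f \<phi> u \<in> L u" if "u \<in> V" for u
    proof (cases "u \<in> H")
      case True
      then have "\<phi> u \<in> L u" using p(2) unfolding L'_def by (auto split: if_splits)
      then show ?thesis using fH True by simp
    next
      case False
      then have "u = w1 \<or> u = w2" using that H_def by auto
      then show ?thesis using fw cL by auto
    qed
    have pr: "f \<phi> u \<noteq> f \<phi> w" if "u \<in> V" "w \<in> V" "E u w" for u w
    proof (cases "u \<in> H")
      case uH: True
      show ?thesis
      proof (cases "w \<in> H")
        case True
        then show ?thesis using uH p(1) that(3) fH by simp
      next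
        case False
        then have "w = w1 \<or> w = w2" using that H_def by auto
        then have "f \<phi> w = c" "E u w1 \<or> E u w2" using fw that(3) by auto
        then show ?thesis using nc[OF uH] fH[OF uH] by simp
      qed
    next
      case uN: False
      then have u12: "u = w1 \<or> u = w2" using that H_def by auto
      show ?thesis
      proof (cases "w \<in> H")
        case True
        have "E w u" using sym that(3) by blast
        then have "E w w1 \<or> E w w2" using u12 by auto
        moreover have "f \<phi> u = c" using u12 fw by auto
        ultimately show ?thesis using nc[OF True] fH[OF True] by simp
      next
        case False
        then have "w = w1 \<or> w = w2" using that H_def by auto
        then show ?thesis using u12 that(3) irr nw sym by blast
      qed
    qed
    show ?thesis unfolding L_colouring_def using col pr by blast
  qed
  define R where "R = (\<lambda>\<phi> \<psi>. L_colouring V E L \<phi> \<and> L_colouring V E L \<psi> \<and> recolour_step V \<phi> \<psi>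
     \<and> \<phi> w1 = \<psi> w1 \<and> \<phi> w2 = \<psi> w2)"
  have fR: "R (f \<phi>) (f \<psi>)" if st: "stp H E L' \<phi> \<psi>" for \<phi> \<psi>
  proof -
    have c1: "L_colouring V E L (f \<phi>)" "L_colouring V E L (f \<psi>)" using st fc unfolding stp_def by blast+
    from st obtain x where x: "x \<in> H" "\<phi> x \<noteq> \<psi> x" "\<forall>y\<in>H - {x}. \<phi> y = \<psi> y"
      unfolding stp_def recolour_step_def by blast
    have xw: "x \<noteq> w1" "x \<noteq> w2" using x(1) unfolding H_def by blast+
    have xV: "x \<in> V" using x(1) unfolding H_def by blast
    have "f \<phi> x \<noteq> f \<psi> x" using x(2) xw unfolding f_def by simp
    moreover have "\<forall>y\<in>V - {x}. f \<phi> y = f \<psi> y"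
    proof
      fix y assume y: "y \<in> V - {x}"
      show "f \<phi> y = f \<psi> y"
      proof (cases "y = w1 \<or> y = w2")
        case True then show ?thesis unfolding f_def by auto
      next
        case False
        then have "y \<in> H - {x}" using y unfolding H_def by blast
        then show ?thesis using x(3) False unfolding f_def by simp
      qed
    qed
    ultimately have "recolour_step V (f \<phi>) (f \<psi>)" unfolding recolour_step_def using xV by blast
    moreover have "f \<phi> w1 = f \<psi> w1" "f \<phi> w2 = f \<psi> w2" unfolding f_def by simp_all
    ultimately show ?thesis unfolding R_def using c1 by blast
  qed
  have "R\<^sup>*\<^sup>* (f \<alpha>) (f \<chi>)" by (rule rtranclp_map[where f=f and S=R, OF ch(1) fR])
  then obtain ps where ps: "ps \<noteq> []" "hd ps = f \<alpha>" "last ps = f \<chi>"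
    "\<forall>i. Suc i < length ps \<longrightarrow> R (ps ! i) (ps ! Suc i)" using rtranclp_list[of R] by blast
  have "\<forall>\<phi>\<in>set ps. L_colouring V E L \<phi>"
  proof (rule list_set[OF ps(1) _ ps(4)])
    show "L_colouring V E L (hd ps)" using fc[OF ca] ps(2) by simp
    show "\<And>x y. R x y \<Longrightarrow> L_colouring V E L y" unfolding R_def by blast
  qed
  moreover have "\<forall>x\<in>V. hd ps x = \<alpha> x" using ps(2) a12 unfolding f_def by simp
  moreover have "\<forall>x\<in>V. last ps x = \<beta> x"
  proof
    fix x assume x: "x \<in> V"
    show "last ps x = \<beta> x"
    proof (cases "x = w1 \<or> x = w2")
      case True then show ?thesis using ps(3) b12 unfolding f_def by auto
    next
      case False
      then have "x \<in> H" using x unfolding H_def by blast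
      then show ?thesis using ps(3) ch(2) False unfolding f_def by simp
    qed
  qed
  ultimately have rs: "recolour_seq V E L \<alpha> \<beta> ps" using ps(1,4) unfolding recolour_seq_def R_def by blast
  have "\<forall>i. Suc i < length ps \<longrightarrow> (ps ! i) w1 = (ps ! Suc i) w1 \<and> (ps ! i) w2 = (ps ! Suc i) w2"
    using ps(4) unfolding R_def by blast
  then show ?thesis using rs unfolding reconf_equiv_def by blast
qed

end
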